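(* For all $\varepsilon>0$ and $A,r\in\mathbb{N}$ there exist $\delta>0$ and $N\in\mathbb{N}$ such that the following holds. Let $n_1,\ldots,n_r$ be positive integers with $n_i\leq An_j$ for all $i,j$ and $n=n_1+\cdots+n_r\geq N$; let $\Lambda=(\lambda_{i,j})$ be a symmetric non-negative $r\times r$ matrix that is connected and $\varepsilon$-separated; let $p_{i,j}=\lambda_{i,j}/\sqrt{n_in_j}$, $P=(p_{i,j})$, $M_{i,j}=p_{i,j}n_j$, and suppose $\rho(M)\geq 1+\varepsilon$. Then for all $i\in[r]$, $\Pr[\mathrm{GW}(\vec n,P,e_i)\text{ goes extinct}]\leq 1-\delta$.
   Context: $\mathrm{GW}(\vec n,P,x)$, for $x\in\mathbb{N}^r$, is the multi-type Galton–Watson process started with $x(i)$ individuals of type $i$, in which each individual of type $i$ independently has, for each $j\in[r]$, an independent $\mathrm{Binomial}(n_j,p_{i,j})$ number of children of type $j$. It goes extinct if its total population is finite. $e_i$ is the $i$-th standard basis vector. $\rho(M)$ is the largest eigenvalue of $M$. $\Lambda$ is $\varepsilon$-separated if for all $i,j$ either $\lambda_{i,j}=0$ or $\varepsilon\leq\lambda_{i,j}\leq 1/\varepsilon$; connected if the graph on $[r]$ with edges $\{i,j\}$ for $\lambda_{i,j}>0$ is connected. *)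

theory Defs
  imports "HOL-Probability.Probability" "Jordan_Normal_Form.Char_Poly"
begin

text \<open>Types are indexed by 0,...,r-1. A population is a function nat => nat, the
count of individuals of each type (zero outside [r]).\<close>

text \<open>One generation step of the multi-type Galton-Watson process GW(n,P,.):
starting from population x, every individual (type i, number k < x i) independently
has, for each type j, an independent Binomial(n j, P i j) number of children of type j.\<close>
definition gw_step :: "nat \<Rightarrow> (nat \<Rightarrow> nat) \<Rightarrow> (nat \<Rightarrow> nat \<Rightarrow> real) \<Rightarrow> (nat \<Rightarrow> nat) \<Rightarrow> (nat \<Rightarrow> nat) pmf" where
  "gw_step r n P x =
     map_pmf (\<lambda>c j. if j < r then (\<Sum>(i,k)\<in>{(i,k). i < r \<and> k < x i}. c (i,k,j)) else 0)
       (Pi_pmf {(i,k,j). i < r \<and> k < x i \<and> j < r} 0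
          (\<lambda>(i,k,j). binomial_pmf (n j) (P i j)))"

primrec gw_gen :: "nat \<Rightarrow> (nat \<Rightarrow> nat) \<Rightarrow> (nat \<Rightarrow> nat \<Rightarrow> real) \<Rightarrow> (nat \<Rightarrow> nat) \<Rightarrow> nat \<Rightarrow> (nat \<Rightarrow> nat) pmf" where
  "gw_gen r n P x 0 = return_pmf x"
| "gw_gen r n P x (Suc m) = bind_pmf (gw_gen r n P x m) (gw_step r n P)"

text \<open>Extinction probability: the process goes extinct (finite total population) iff
some generation is empty; the events "generation m is empty" increase in m
(the empty population is absorbing), so the probability is their supremum.\<close>
definition gw_extinction_prob :: "nat \<Rightarrow> (nat \<Rightarrow> nat) \<Rightarrow> (nat \<Rightarrow> nat \<Rightarrow> real) \<Rightarrow> (nat \<Rightarrow> nat) \<Rightarrow> real" where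
  "gw_extinction_prob r n P x =
     (SUP m. measure_pmf.prob (gw_gen r n P x m) {z. \<forall>j<r. z j = 0})"

definition basis_pop :: "nat \<Rightarrow> nat \<Rightarrow> nat" where
  "basis_pop i = (\<lambda>j. if j = i then 1 else 0)"

definition largest_eigenvalue :: "real mat \<Rightarrow> real" where
  "largest_eigenvalue M = Max {k. eigenvalue M k}"

definition eps_separated :: "real \<Rightarrow> nat \<Rightarrow> (nat \<Rightarrow> nat \<Rightarrow> real) \<Rightarrow> bool" where
  "eps_separated \<epsilon> r L = (\<forall>i<r. \<forall>j<r. L i j = 0 \<or> (\<epsilon> \<le> L i j \<and> L i j \<le> 1 / \<epsilon>))"

definition connected_mat :: "nat \<Rightarrow> (nat \<Rightarrow> nat \<Rightarrow> real) \<Rightarrow> bool" where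
  "connected_mat r L = (\<forall>i<r. \<forall>j<r. (i, j) \<in> {(a, b). a < r \<and> b < r \<and> L a b > 0}\<^sup>*)"

end

theory Submission
  imports Defs "Jordan_Normal_Form.Spectral_Radius"
begin

lemma prob_bind_le:
  fixes p :: "'a pmf" and f :: "'a \<Rightarrow> 'b pmf"
  assumes le: "\<And>y. measure_pmf.prob (f y) A \<le> g y" and int: "integrable (measure_pmf p) g"
  shows "measure_pmf.prob (bind_pmf p f) A \<le> measure_pmf.expectation p g"
proof -
  have g0: "\<And>y. 0 \<le> g y" using le order_trans measure_nonneg by metis
  have "ennreal (measure_pmf.prob (bind_pmf p f) A) = emeasure (measure_pmf (bind_pmf p f)) A"
    by (simp add: measure_pmf.emeasure_eq_measure)
  also have "\<dots> = (\<integral>\<^sup>+y. emeasure (measure_pmf (f y)) A \<partial>measure_pmf p)" by simp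
  also have "\<dots> = (\<integral>\<^sup>+y. ennreal (measure_pmf.prob (f y) A) \<partial>measure_pmf p)"
    by (simp add: measure_pmf.emeasure_eq_measure)
  also have "\<dots> \<le> (\<integral>\<^sup>+y. ennreal (g y) \<partial>measure_pmf p)"
    by (intro nn_integral_mono ennreal_leI le)
  also have "\<dots> = ennreal (measure_pmf.expectation p g)"
    by (intro nn_integral_eq_integral int) (simp add: g0)
  finally show ?thesis
    by (subst (asm) ennreal_le_iff) (auto intro!: integral_nonneg_AE simp: g0)
qed

lemma gen_Suc':
  "gw_gen r n P x (Suc m) = bind_pmf (gw_step r n P x) (\<lambda>y. gw_gen r n P y m)"
proof (induction m arbitrary: x)
  case 0
  then show ?case by (simp add: bind_return_pmf bind_return_pmf')
next
  case (Suc m)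
  have "gw_gen r n P x (Suc (Suc m)) = bind_pmf (gw_gen r n P x (Suc m)) (gw_step r n P)"
    by (simp only: gw_gen.simps(2))
  also have "\<dots> = bind_pmf (bind_pmf (gw_step r n P x) (\<lambda>y. gw_gen r n P y m)) (gw_step r n P)"
    by (simp only: Suc.IH)
  also have "\<dots> = bind_pmf (gw_step r n P x) (\<lambda>y. bind_pmf (gw_gen r n P y m) (gw_step r n P))"
    by (rule bind_assoc_pmf)
  finally show ?case by simp
qed

definition gwf :: "nat \<Rightarrow> (nat \<Rightarrow> nat) \<Rightarrow> (nat \<Rightarrow> nat \<Rightarrow> real) \<Rightarrow> (nat \<Rightarrow> real) \<Rightarrow> nat \<Rightarrow> real" where
  "gwf r n P s i = (\<Prod>j<r. (1 - P i j + P i j * s j) ^ n j)"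

lemma binom_pgf:
  assumes "p \<in> {0..1}"
  shows "measure_pmf.expectation (binomial_pmf m p) (\<lambda>v. (a::real) ^ v) = (1 - p + p * a) ^ m"
proof -
  have "measure_pmf.expectation (binomial_pmf m p) (\<lambda>v. a ^ v)
      = (\<Sum>k\<le>m. real (m choose k) * (p * a) ^ k * (1 - p) ^ (m - k))"
    using assms by (simp add: expectation_binomial_pmf' power_mult_distrib mult_ac)
  also have "\<dots> = (p * a + (1 - p)) ^ m" by (simp add: binomial_ring)
  finally show ?thesis by (simp add: algebra_simps)
qed

lemma prod_Sigma3:
  assumes "finite A" "\<And>i. i \<in> A \<Longrightarrow> finite (B i)" "finite C"
  shows "(\<Prod>t\<in>Sigma A (\<lambda>i. B i \<times> C). h t) = (\<Prod>i\<in>A. \<Prod>k\<in>B i. \<Prod>j\<in>C. h (i,k,j))"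
proof -
  have "(\<Prod>t\<in>Sigma A (\<lambda>i. B i \<times> C). h t) = (\<Prod>i\<in>A. \<Prod>u\<in>B i \<times> C. h (i,u))"
    using prod.Sigma[of A "\<lambda>i. B i \<times> C" "\<lambda>i u. h (i,u)"] assms by simp
  also have "\<dots> = (\<Prod>i\<in>A. \<Prod>k\<in>B i. \<Prod>j\<in>C. h (i,k,j))"
    by (intro prod.cong refl) (simp add: prod.cartesian_product case_prod_beta)
  finally show ?thesis .
qed

lemma prod_Sigma2:
  assumes "finite A" "\<And>i. i \<in> A \<Longrightarrow> finite (B i)"
  shows "(\<Prod>t\<in>Sigma A B. h t) = (\<Prod>i\<in>A. \<Prod>k\<in>B i. h (i,k))"
  using prod.Sigma[of A B "\<lambda>i u. h (i,u)"] assms by simp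

lemma step_pgf:
  assumes P: "\<And>i j. i < r \<Longrightarrow> j < r \<Longrightarrow> P i j \<in> {0..1}"
    and s: "\<And>j. j < r \<Longrightarrow> 0 \<le> s j"
  shows "measure_pmf.expectation (gw_step r n P x) (\<lambda>y. \<Prod>j<r. s j ^ y j)
       = (\<Prod>i<r. gwf r n P s i ^ x i)"
proof -
  define I where "I = {(i,k,j). i < r \<and> k < x i \<and> j < r}"
  define J where "J = {(i,k). i < r \<and> k < x i}"
  have I: "I = Sigma {..<r} (\<lambda>i. {..<x i} \<times> {..<r})" unfolding I_def by auto
  have J: "J = Sigma {..<r} (\<lambda>i. {..<x i})" unfolding J_def by auto
  have finI: "finite I" unfolding I by auto
  have eq: "(\<Prod>j<r. s j ^ (\<Sum>(i,k)\<in>J. c (i,k,j))) = (\<Prod>t\<in>I. s (snd (snd t)) ^ c t)" for c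
  proof -
    have "(\<Prod>j<r. s j ^ (\<Sum>(i,k)\<in>J. c (i,k,j))) = (\<Prod>j<r. \<Prod>(i,k)\<in>J. s j ^ c (i,k,j))"
      by (simp add: power_sum case_prod_beta)
    also have "\<dots> = (\<Prod>(i,k)\<in>J. \<Prod>j<r. s j ^ c (i,k,j))"
      using prod.swap[of "\<lambda>j t. s j ^ c (fst t, snd t, j)" J "{..<r}"] by (simp add: case_prod_beta)
    also have "\<dots> = (\<Prod>i<r. \<Prod>k<x i. \<Prod>j<r. s j ^ c (i,k,j))"
      unfolding J by (subst prod_Sigma2) (auto simp: case_prod_beta)
    also have "\<dots> = (\<Prod>t\<in>I. s (snd (snd t)) ^ c t)"
      unfolding I by (subst prod_Sigma3) auto
    finally show ?thesis .
  qed
  have "measure_pmf.expectation (gw_step r n P x) (\<lambda>y. \<Prod>j<r. s j ^ y j)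
      = measure_pmf.expectation (Pi_pmf I 0 (\<lambda>(i,k,j). binomial_pmf (n j) (P i j)))
          (\<lambda>c. \<Prod>j<r. s j ^ (\<Sum>(i,k)\<in>J. c (i,k,j)))"
    unfolding gw_step_def I_def J_def by simp
  also have "\<dots> = measure_pmf.expectation (Pi_pmf I 0 (\<lambda>(i,k,j). binomial_pmf (n j) (P i j)))
          (\<lambda>c. \<Prod>t\<in>I. s (snd (snd t)) ^ c t)"
    by (simp add: eq)
  also have "\<dots> = (\<Prod>t\<in>I. measure_pmf.expectation ((\<lambda>(i,k,j). binomial_pmf (n j) (P i j)) t)
                      (\<lambda>v. s (snd (snd t)) ^ v))"
  proof (rule expectation_prod_Pi_pmf[OF finI])
    fix t assume "t \<in> I"
    then show "integrable (measure_pmf ((\<lambda>(i,k,j). binomial_pmf (n j) (P i j)) t)) (\<lambda>v. s (snd (snd t)) ^ v)"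
      using P unfolding I_def by (auto intro!: integrable_binomial_pmf)
  next
    fix t y assume "t \<in> I"
    then show "0 \<le> s (snd (snd t)) ^ y" using s unfolding I_def by auto
  qed
  also have "\<dots> = (\<Prod>t\<in>I. (\<lambda>(i,k,j). (1 - P i j + P i j * s j) ^ n j) t)"
    by (intro prod.cong refl) (use P in \<open>auto simp: I_def binom_pgf\<close>)
  also have "\<dots> = (\<Prod>i<r. \<Prod>k<x i. gwf r n P s i)"
    unfolding I by (subst prod_Sigma3) (auto simp: gwf_def)
  also have "\<dots> = (\<Prod>i<r. gwf r n P s i ^ x i)" by simp
  finally show ?thesis .
qed


lemma gen_bound:
  assumes P: "\<And>i j. i < r \<Longrightarrow> j < r \<Longrightarrow> P i j \<in> {0..1}"
    and s: "\<And>j. j < r \<Longrightarrow> 0 \<le> s j \<and> s j \<le> 1"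
    and sup: "\<And>i. i < r \<Longrightarrow> gwf r n P s i \<le> s i"
  shows "measure_pmf.prob (gw_gen r n P x m) {z. \<forall>j<r. z j = 0} \<le> (\<Prod>i<r. s i ^ x i)"
proof (induction m arbitrary: x)
  case 0
  show ?case
  proof (cases "\<forall>j<r. x j = 0")
    case True
    then have "(\<Prod>i<r. s i ^ x i) = 1" by simp
    then show ?thesis by simp
  next
    case False
    then have "measure_pmf.prob (gw_gen r n P x 0) {z. \<forall>j<r. z j = 0} = 0"
      by (simp add: measure_return_pmf)
    moreover have "0 \<le> (\<Prod>i<r. s i ^ x i)" using s by (intro prod_nonneg) auto
    ultimately show ?thesis by simp
  qed
next
  case (Suc m)
  have int: "integrable (measure_pmf (gw_step r n P x)) (\<lambda>y. \<Prod>j<r. s j ^ y j)"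
  proof (rule measure_pmf.integrable_const_bound[where B=1])
    show "AE y in measure_pmf (gw_step r n P x). norm (\<Prod>j<r. s j ^ y j) \<le> 1"
    proof (intro AE_pmfI)
      fix y
      have "0 \<le> (\<Prod>j<r. s j ^ y j)" using s by (intro prod_nonneg) auto
      moreover have "(\<Prod>j<r. s j ^ y j) \<le> 1" using s by (intro prod_le_1) (auto intro: power_le_one)
      ultimately show "norm (\<Prod>j<r. s j ^ y j) \<le> 1" by simp
    qed
  qed simp
  have "measure_pmf.prob (gw_gen r n P x (Suc m)) {z. \<forall>j<r. z j = 0}
      \<le> measure_pmf.expectation (gw_step r n P x) (\<lambda>y. \<Prod>j<r. s j ^ y j)"
    unfolding gen_Suc' by (rule prob_bind_le[OF Suc.IH int])
  also have "\<dots> = (\<Prod>i<r. gwf r n P s i ^ x i)"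
    using P s by (intro step_pgf) auto
  also have "\<dots> \<le> (\<Prod>i<r. s i ^ x i)"
  proof (intro prod_mono conjI power_mono)
    fix i assume "i \<in> {..<r}"
    then show "0 \<le> gwf r n P s i ^ x i" "0 \<le> gwf r n P s i" "gwf r n P s i \<le> s i"
      using P s sup unfolding gwf_def
      by (auto intro!: prod_nonneg zero_le_power simp: algebra_simps)
         (smt (verit) atLeastAtMost_iff mult_left_le mult_nonneg_nonneg)+
  qed
  finally show ?case .
qed

lemma extinction_bound:
  assumes P: "\<And>i j. i < r \<Longrightarrow> j < r \<Longrightarrow> P i j \<in> {0..1}"
    and s: "\<And>j. j < r \<Longrightarrow> 0 \<le> s j \<and> s j \<le> 1"
    and sup: "\<And>i. i < r \<Longrightarrow> gwf r n P s i \<le> s i"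
    and i: "i < r"
  shows "gw_extinction_prob r n P (basis_pop i) \<le> s i"
  unfolding gw_extinction_prob_def
proof (rule cSUP_least)
  fix m
  have "(\<Prod>j<r. s j ^ basis_pop i j) = (\<Prod>j<r. if j = i then s j else 1)"
    by (intro prod.cong refl) (auto simp: basis_pop_def)
  then have e: "(\<Prod>j<r. s j ^ basis_pop i j) = s i" using i by simp
  show "measure_pmf.prob (gw_gen r n P (basis_pop i) m) {z. \<forall>j<r. z j = 0} \<le> s i"
    using gen_bound[OF P s sup, of "basis_pop i" m] e by simp
qed simp


lemma one_minus_le_exp: "1 - (x::real) \<le> exp (- x)"
  using exp_ge_add_one_self[of "-x"] by simp

lemma pow_le_exp:
  assumes "0 \<le> x" "x \<le> 1"
  shows "(1 - x) ^ k \<le> exp (- (real k * x))"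
proof -
  have "(1 - x) ^ k \<le> exp (- x) ^ k" using assms by (intro power_mono one_minus_le_exp) auto
  also have "\<dots> = exp (- (real k * x))" by (simp add: exp_of_nat_mult[symmetric])
  finally show ?thesis .
qed

lemma exp_le_one_minus:
  fixes x e :: real
  assumes "0 \<le> x" "x \<le> 1/2" "2 * x \<le> e"
  shows "exp (- ((1 + e) * x)) \<le> 1 - x"
proof -
  have "- x - 2 * x\<^sup>2 \<le> ln (1 - x)" using ln_one_minus_pos_lower_bound assms by auto
  moreover have "x * (2 * x) \<le> x * e" using mult_left_mono[OF assms(3) assms(1)] .
  then have "- ((1 + e) * x) \<le> - x - 2 * x\<^sup>2"
    by (simp add: power2_eq_square algebra_simps)
  ultimately have "- ((1 + e) * x) \<le> ln (1 - x)" by linarith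
  then have "exp (- ((1 + e) * x)) \<le> exp (ln (1 - x))" by simp
  also have "\<dots> = 1 - x" using assms by simp
  finally show ?thesis .
qed

lemma gwf_super:
  assumes P: "\<And>i j. i < r \<Longrightarrow> j < r \<Longrightarrow> P i j \<in> {0..1}"
    and u: "\<And>j. j < r \<Longrightarrow> 0 \<le> u j \<and> u j \<le> c"
    and c: "c \<le> 1/2" "2 * c \<le> e"
    and Mu: "(1 + e) * u i \<le> (\<Sum>j<r. P i j * real (n j) * u j)"
    and i: "i < r"
  shows "gwf r n P (\<lambda>j. 1 - u j) i \<le> 1 - u i"
proof -
  have "gwf r n P (\<lambda>j. 1 - u j) i = (\<Prod>j<r. (1 - P i j * u j) ^ n j)"
    unfolding gwf_def by (simp add: algebra_simps)
  also have "\<dots> \<le> (\<Prod>j<r. exp (- (real (n j) * (P i j * u j))))"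
  proof (intro prod_mono conjI)
    fix j assume j: "j \<in> {..<r}"
    have "0 \<le> P i j * u j" "P i j * u j \<le> 1" using P[OF i, of j] u[of j] c j
      by (auto intro: mult_le_one)
    then show "0 \<le> (1 - P i j * u j) ^ n j" "(1 - P i j * u j) ^ n j \<le> exp (- (real (n j) * (P i j * u j)))"
      by (auto intro: pow_le_exp)
  qed
  also have "\<dots> = exp (- (\<Sum>j<r. P i j * real (n j) * u j))"
    by (simp add: exp_sum[symmetric] sum_negf mult_ac)
  also have "\<dots> \<le> exp (- ((1 + e) * u i))" using Mu by simp
  also have "\<dots> \<le> 1 - u i" using u[OF i] c by (intro exp_le_one_minus) auto
  finally show ?thesis .
qed

lemma pgf_factor_range:
  fixes p s :: real
  assumes "0 \<le> p" "p \<le> 1" "0 \<le> s" "s \<le> 1"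
  shows "0 \<le> 1 - p + p * s \<and> 1 - p + p * s \<le> 1"
proof -
  have "p * s \<le> p" using assms mult_left_le by blast
  moreover have "0 \<le> p * s" using assms by simp
  ultimately show ?thesis using assms by linarith
qed

lemma gwf_range:
  assumes P: "\<And>i j. i < r \<Longrightarrow> j < r \<Longrightarrow> P i j \<in> {0..1}"
    and s: "\<And>j. j < r \<Longrightarrow> 0 \<le> s j \<and> s j \<le> 1" and i: "i < r"
  shows "0 \<le> gwf r n P s i \<and> gwf r n P s i \<le> 1"
proof -
  have b: "0 \<le> 1 - P i j + P i j * s j \<and> 1 - P i j + P i j * s j \<le> 1" if "j < r" for j
    using P[OF i that] s[OF that] pgf_factor_range by simp
  show ?thesis unfolding gwf_def using b
    by (auto intro!: prod_nonneg prod_le_1 power_le_one)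
qed

lemma gwf_mono:
  assumes P: "\<And>i j. i < r \<Longrightarrow> j < r \<Longrightarrow> P i j \<in> {0..1}"
    and s: "\<And>j. j < r \<Longrightarrow> 0 \<le> s j \<and> s j \<le> t j" and i: "i < r"
  shows "gwf r n P s i \<le> gwf r n P t i"
  unfolding gwf_def
proof (intro prod_mono conjI power_mono)
  fix j assume j: "j \<in> {..<r}"
  then show "0 \<le> 1 - P i j + P i j * s j" using P[OF i, of j] s[of j]
    by simp
  then show "0 \<le> (1 - P i j + P i j * s j) ^ n j" by simp
  show "1 - P i j + P i j * s j \<le> 1 - P i j + P i j * t j" using P[OF i, of j] s[of j] j
    by (simp add: mult_left_mono)
qed

lemma gwf_prop:
  assumes P: "\<And>i j. i < r \<Longrightarrow> j < r \<Longrightarrow> P i j \<in> {0..1}"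
    and s: "\<And>j. j < r \<Longrightarrow> 0 \<le> s j \<and> s j \<le> 1" and i: "i < r" and j: "j < r"
    and a: "0 < a" "a \<le> P i j * real (n j)"
  shows "(a / (1 + a)) * (1 - s j) \<le> 1 - gwf r n P s i"
proof -
  define f where "f k = (1 - P i k + P i k * s k) ^ n k" for k
  have b: "0 \<le> f k \<and> f k \<le> 1" if "k < r" for k
    using P[OF i that] s[OF that] pgf_factor_range[of "P i k" "s k"] unfolding f_def
    by (auto intro!: power_le_one)
  have "gwf r n P s i = f j * (\<Prod>k\<in>{..<r} - {j}. f k)"
    unfolding gwf_def f_def using j by (simp add: prod.remove)
  also have "\<dots> \<le> f j * 1" using b j
    by (intro mult_left_mono prod_le_1) auto
  finally have g1: "gwf r n P s i \<le> f j" by simp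
  define y where "y = 1 - s j"
  have y: "0 \<le> y" "y \<le> 1" using s[OF j] by (auto simp: y_def)
  have "f j = (1 - P i j * y) ^ n j" by (simp add: f_def y_def algebra_simps)
  also have "\<dots> \<le> exp (- (real (n j) * (P i j * y)))"
    using P[OF i j] y by (intro pow_le_exp) (auto intro: mult_le_one)
  also have "\<dots> \<le> exp (- (a * y))"
  proof -
    have "a * y \<le> (P i j * real (n j)) * y" using a y by (intro mult_right_mono) auto
    then show ?thesis by (simp add: mult_ac)
  qed
  also have "\<dots> \<le> 1 / (1 + a * y)"
  proof -
    have "1 + a * y \<le> exp (a * y)" by (rule exp_ge_add_one_self)
    moreover have "0 < 1 + a * y" using a y by (simp add: add_pos_nonneg)
    ultimately show ?thesis by (simp add: exp_minus field_simps)
  qed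
  finally have "gwf r n P s i \<le> 1 / (1 + a * y)" using g1 by simp
  then have "1 - 1 / (1 + a * y) \<le> 1 - gwf r n P s i" by simp
  moreover have "(a / (1 + a)) * y \<le> 1 - 1 / (1 + a * y)"
  proof -
    have pos: "0 < 1 + a * y" "0 < 1 + a" using a y by (auto simp: add_pos_nonneg)
    have "1 - 1 / (1 + a * y) = a * y / (1 + a * y)" using pos by (simp add: field_simps)
    moreover have "(a / (1 + a)) * y = a * y / (1 + a)" by simp
    moreover have "a * y / (1 + a) \<le> a * y / (1 + a * y)"
      using pos a y by (intro divide_left_mono) (auto simp: mult_left_le)
    ultimately show ?thesis by simp
  qed
  ultimately show ?thesis by (simp add: y_def)
qed


lemma crossing:
  assumes conn: "connected_mat r L" and a: "a \<in> T" and b: "b < r" "b \<notin> T" and T: "T \<subseteq> {..<r}"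
  shows "\<exists>x y. x \<in> T \<and> y \<notin> T \<and> x < r \<and> y < r \<and> L x y > 0"
proof -
  define E where "E = {(a, b). a < r \<and> b < r \<and> L a b > 0}"
  have ab: "(a, b) \<in> E\<^sup>*" using conn a b T unfolding connected_mat_def E_def by auto
  have "b \<notin> T \<longrightarrow> (\<exists>x y. x \<in> T \<and> y \<notin> T \<and> x < r \<and> y < r \<and> L x y > 0)"
    using ab
  proof (induction rule: rtrancl_induct)
    case base
    then show ?case using a by auto
  next
    case (step y z)
    show ?case
    proof (cases "y \<in> T")
      case True
      then show ?thesis using step(2) unfolding E_def by auto
    next
      case False
      then show ?thesis using step(3) by auto
    qed
  qed
  then show ?thesis using b by auto
qed

lemma iterate_bound:
  fixes c a :: real
  assumes P: "\<And>i j. i < r \<Longrightarrow> j < r \<Longrightarrow> P i j \<in> {0..1}"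
    and s0: "\<And>j. j < r \<Longrightarrow> 0 \<le> s0 j \<and> s0 j \<le> 1"
    and sup0: "\<And>i. i < r \<Longrightarrow> gwf r n P s0 i \<le> s0 i"
    and i0: "i0 < r" "c \<le> 1 - s0 i0" and c: "0 \<le> c"
    and a: "0 < a"
    and edge: "\<And>i j. i < r \<Longrightarrow> j < r \<Longrightarrow> L i j > 0 \<Longrightarrow> a \<le> P i j * real (n j)"
    and conn: "connected_mat r L" and sym: "\<And>i j. i < r \<Longrightarrow> j < r \<Longrightarrow> L i j = L j i"
  shows "\<exists>s. (\<forall>j<r. 0 \<le> s j \<and> s j \<le> 1) \<and> (\<forall>i<r. gwf r n P s i \<le> s i) \<and>
             (\<forall>i<r. c * (a / (1 + a)) ^ (r - 1) \<le> 1 - s i)"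
proof -
  define c1 where "c1 = a / (1 + a)"
  have c1: "0 < c1" "c1 \<le> 1" using a unfolding c1_def by auto
  define g where "g t = ((\<lambda>s i. gwf r n P s i) ^^ t) s0" for t
  have g0: "g 0 = s0" and gS: "g (Suc t) = (\<lambda>i. gwf r n P (g t) i)" for t
    unfolding g_def by auto
  have inv: "(\<forall>j<r. 0 \<le> g t j \<and> g t j \<le> 1) \<and> (\<forall>i<r. gwf r n P (g t) i \<le> g t i)" for t
  proof (induction t)
    case 0
    then show ?case using s0 sup0 by (simp add: g0)
  next
    case (Suc t)
    have r1: "\<forall>j<r. 0 \<le> g (Suc t) j \<and> g (Suc t) j \<le> 1"
      using Suc gwf_range[OF P] by (simp add: gS)
    have "\<forall>i<r. gwf r n P (g (Suc t)) i \<le> g (Suc t) i"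
    proof (intro allI impI)
      fix i assume i: "i < r"
      show "gwf r n P (g (Suc t)) i \<le> g (Suc t) i"
        unfolding gS[of t]
        by (rule gwf_mono[OF P _ i]) (use Suc r1 in \<open>auto simp: gS\<close>)
    qed
    then show ?case using r1 by simp
  qed
  have dec: "g (Suc t) j \<le> g t j" if "j < r" for t j
    using inv[of t] that by (simp add: gS)
  define T where "T t = {i. i < r \<and> c * c1 ^ t \<le> 1 - g t i}" for t
  have Tsub: "T t \<subseteq> {..<r}" for t unfolding T_def by auto
  have finT: "finite (T t)" for t using Tsub finite_subset by blast
  have mono: "T t \<subseteq> T (Suc t)" for t
  proof
    fix i assume "i \<in> T t"
    then have i: "i < r" "c * c1 ^ t \<le> 1 - g t i" unfolding T_def by auto
    have "c * c1 ^ Suc t \<le> c * c1 ^ t"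
      using c c1 by (intro mult_left_mono) (auto intro: power_decreasing)
    also have "\<dots> \<le> 1 - g (Suc t) i" using i dec[OF i(1), of t] by linarith
    finally show "i \<in> T (Suc t)" using i unfolding T_def by auto
  qed
  have card: "min (Suc t) r \<le> card (T t)" for t
  proof (induction t)
    case 0
    have "i0 \<in> T 0" using i0 unfolding T_def by (simp add: g0)
    then have "1 \<le> card (T 0)" using finT[of 0] by (metis One_nat_def Suc_leI card_gt_0_iff empty_iff)
    then show ?case by simp
  next
    case (Suc t)
    show ?case
    proof (cases "T t = {..<r}")
      case True
      then have "{..<r} \<subseteq> T (Suc t)" using mono[of t] by auto
      then have "T (Suc t) = {..<r}" using Tsub by auto
      then show ?thesis by simp
    next
      case False
      then obtain b where b: "b < r" "b \<notin> T t" using Tsub by auto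
      then have "0 < r" by simp
      then have "1 \<le> card (T t)" using Suc.IH by linarith
      then obtain a0 where "a0 \<in> T t" by (metis card.empty ex_in_conv not_one_le_zero)
      from crossing[OF conn this b Tsub] obtain x y where
        xy: "x \<in> T t" "y \<notin> T t" "x < r" "y < r" "L x y > 0" by blast
      have Lyx: "L y x > 0" using xy sym by simp
      have "c1 * (1 - g t x) \<le> 1 - gwf r n P (g t) y"
        unfolding c1_def using inv[of t] xy a edge[OF xy(4) xy(3) Lyx]
        by (intro gwf_prop[OF P]) auto
      moreover have "c * c1 ^ t \<le> 1 - g t x" using xy unfolding T_def by auto
      ultimately have "c * c1 ^ Suc t \<le> 1 - g (Suc t) y"
        using c1 by (simp add: gS) (smt (verit) mult_left_mono mult.assoc mult.commute)
      then have "y \<in> T (Suc t)" using xy unfolding T_def by auto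
      then have "insert y (T t) \<subseteq> T (Suc t)" using mono by auto
      then have "card (insert y (T t)) \<le> card (T (Suc t))" by (intro card_mono finT)
      then have "Suc (card (T t)) \<le> card (T (Suc t))" using xy finT by simp
      then show ?thesis using Suc.IH by linarith
    qed
  qed
  have "T (r - 1) = {..<r}"
  proof (rule card_subset_eq[OF _ Tsub])
    show "finite {..<r}" by simp
    show "card (T (r - 1)) = card {..<r}" using card[of "r - 1"] card_mono[OF _ Tsub[of "r - 1"]]
      by (cases r) auto
  qed
  then show ?thesis using inv[of "r - 1"] unfolding T_def c1_def
    by (intro exI[of _ "g (r - 1)"]) auto
qed


lemma real_eig_exists:
  fixes w :: "nat \<Rightarrow> real" and m :: "nat \<Rightarrow> nat \<Rightarrow> real"
  assumes r: "0 < r" and w: "\<And>i. i < r \<Longrightarrow> 0 < w i"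
    and sym: "\<And>i j. i < r \<Longrightarrow> j < r \<Longrightarrow> w i * m i j = w j * m j i"
  shows "\<exists>k. eigenvalue (mat r r (\<lambda>(i,j). m i j)) k"
proof -
  define M where "M = mat r r (\<lambda>(i,j). m i j)"
  define MC where "MC = map_mat complex_of_real M"
  have M: "M \<in> carrier_mat r r" unfolding M_def by simp
  have MC: "MC \<in> carrier_mat r r" unfolding MC_def M_def by simp
  obtain lam where "lam \<in> spectrum MC" using spectrum_non_empty[OF MC r] by auto
  then have evl: "eigenvalue MC lam" unfolding spectrum_def by simp
  then obtain z where z: "z \<in> carrier_vec r" "z \<noteq> 0\<^sub>v r" "MC *\<^sub>v z = lam \<cdot>\<^sub>v z"
    unfolding eigenvalue_def eigenvector_def using MC by auto
  have ev: "(\<Sum>j<r. of_real (m i j) * z $ j) = lam * z $ i" if i: "i < r" for i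
  proof -
    have "(MC *\<^sub>v z) $ i = (lam \<cdot>\<^sub>v z) $ i" using z by simp
    then show ?thesis using i z(1) MC
      by (simp add: MC_def M_def scalar_prod_def atLeast0LessThan)
  qed
  define S where "S = (\<Sum>i<r. \<Sum>j<r. of_real (w i * m i j) * (cnj (z $ i) * z $ j))"
  define T where "T = (\<Sum>i<r. w i * (cmod (z $ i))\<^sup>2)"
  have "S = (\<Sum>i<r. of_real (w i) * cnj (z $ i) * (\<Sum>j<r. of_real (m i j) * z $ j))"
    unfolding S_def by (simp add: sum_distrib_left mult_ac)
  also have "\<dots> = (\<Sum>i<r. lam * (of_real (w i) * (cnj (z $ i) * z $ i)))"
  proof (intro sum.cong refl)
    fix i assume "i \<in> {..<r}"
    then have e: "(\<Sum>j<r. of_real (m i j) * z $ j) = lam * z $ i" using ev by simp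
    show "of_real (w i) * cnj (z $ i) * (\<Sum>j<r. of_real (m i j) * z $ j)
        = lam * (of_real (w i) * (cnj (z $ i) * z $ i))"
      unfolding e by (simp add: mult_ac)
  qed
  also have "\<dots> = lam * of_real T"
  proof -
    have cz: "cnj (z $ i) * z $ i = complex_of_real ((cmod (z $ i))\<^sup>2)" for i
      using complex_norm_square[of "z $ i"] by (simp add: mult.commute)
    show ?thesis unfolding T_def of_real_sum sum_distrib_left cz
      by (intro sum.cong refl) (simp only: of_real_mult)
  qed
  finally have S1: "S = lam * of_real T" .
  have "cnj S = (\<Sum>i<r. \<Sum>j<r. of_real (w i * m i j) * (z $ i * cnj (z $ j)))"
    unfolding S_def by simp
  also have "\<dots> = (\<Sum>i<r. \<Sum>j<r. of_real (w j * m j i) * (cnj (z $ j) * z $ i))"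
    by (intro sum.cong refl) (simp add: sym mult_ac)
  also have "\<dots> = S" unfolding S_def by (rule sum.swap)
  finally have "cnj S = S" .
  then have h2: "Im (cnj S) = Im S" by (simp only:)
  have h1: "Im (cnj S) = - Im S" by simp
  have imS: "Im S = 0" using h1 h2 by linarith
  obtain i where i: "i < r" "z $ i \<noteq> 0"
  proof (rule ccontr)
    assume "\<not> thesis"
    with that have "\<forall>i<r. z $ i = 0" by blast
    then have "z = 0\<^sub>v r" using z(1) by (intro eq_vecI) auto
    with z(2) show False by simp
  qed
  have "0 < w i * (cmod (z $ i))\<^sup>2" using w[OF i(1)] i(2) by simp
  also have "\<dots> \<le> T" unfolding T_def using i(1) w
    by (intro member_le_sum) (simp_all add: less_imp_le)
  finally have Tpos: "0 < T" .
  have "Im lam * T = 0" using imS S1 by simp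
  then have "Im lam = 0" using Tpos by simp
  then have lam: "lam = of_real (Re lam)" by (simp add: complex_eq_iff)
  have "poly (char_poly MC) lam = 0" using evl eigenvalue_root_char_poly[OF MC] by simp
  moreover have "char_poly MC = map_poly of_real (char_poly M)"
    unfolding MC_def by (rule of_real_hom.char_poly_hom[OF M])
  ultimately have "poly (map_poly complex_of_real (char_poly M)) (of_real (Re lam)) = 0"
    using lam by simp
  then have "poly (char_poly M) (Re lam) = 0" by (simp add: of_real_hom.poly_map_poly)
  then have "eigenvalue M (Re lam)" using eigenvalue_root_char_poly[OF M] by simp
  then show ?thesis unfolding M_def by blast
qed

lemma abs_eigvec:
  fixes m :: "nat \<Rightarrow> nat \<Rightarrow> real"
  assumes ev: "eigenvalue (mat r r (\<lambda>(i,j). m i j)) k" and k: "0 \<le> k"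
    and m: "\<And>i j. i < r \<Longrightarrow> j < r \<Longrightarrow> 0 \<le> m i j"
  shows "\<exists>u. (\<forall>j<r. 0 \<le> u j) \<and> (\<exists>j<r. u j > 0) \<and> (\<forall>i<r. k * u i \<le> (\<Sum>j<r. m i j * u j))"
proof -
  define M where "M = mat r r (\<lambda>(i,j). m i j)"
  have M: "M \<in> carrier_mat r r" unfolding M_def by simp
  obtain v where v: "v \<in> carrier_vec r" "v \<noteq> 0\<^sub>v r" "M *\<^sub>v v = k \<cdot>\<^sub>v v"
    using ev unfolding eigenvalue_def eigenvector_def M_def[symmetric] using M by auto
  have evi: "(\<Sum>j<r. m i j * v $ j) = k * v $ i" if i: "i < r" for i
  proof -
    have "(M *\<^sub>v v) $ i = (k \<cdot>\<^sub>v v) $ i" using v by simp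
    then show ?thesis using i v(1) M
      by (simp add: M_def scalar_prod_def atLeast0LessThan)
  qed
  define u where "u j = \<bar>v $ j\<bar>" for j
  obtain i where i: "i < r" "v $ i \<noteq> 0"
  proof (rule ccontr)
    assume "\<not> thesis"
    with that have "\<forall>i<r. v $ i = 0" by blast
    then have "v = 0\<^sub>v r" using v(1) by (intro eq_vecI) auto
    with v(2) show False by simp
  qed
  have "k * u i \<le> (\<Sum>j<r. m i j * u j)" if i: "i < r" for i
  proof -
    have "k * u i = \<bar>\<Sum>j<r. m i j * v $ j\<bar>" using evi[OF i] k by (simp add: u_def abs_mult)
    also have "\<dots> \<le> (\<Sum>j<r. \<bar>m i j * v $ j\<bar>)" by (rule sum_abs)
    also have "\<dots> = (\<Sum>j<r. m i j * u j)" using m i by (intro sum.cong refl) (simp add: u_def abs_mult)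
    finally show ?thesis .
  qed
  then show ?thesis using i by (intro exI[of _ u]) (auto simp: u_def)
qed


lemma main_core:
  fixes \<epsilon> :: real and A r :: nat and n :: "nat \<Rightarrow> nat" and L P :: "nat \<Rightarrow> nat \<Rightarrow> real"
  assumes eps: "\<epsilon> > 0" and r: "0 < r"
    and npos: "\<forall>i<r. n i > 0"
    and ratio: "\<forall>i<r. \<forall>j<r. n i \<le> A * n j"
    and big: "r * A * nat \<lceil>1 / \<epsilon>\<rceil> \<le> (\<Sum>i<r. n i)"
    and symL: "\<forall>i<r. \<forall>j<r. L i j = L j i \<and> L i j \<ge> 0"
    and conn: "connected_mat r L"
    and sep: "eps_separated \<epsilon> r L"
    and Pdef: "P = (\<lambda>i j. L i j / sqrt (real (n i * n j)))"
    and ev: "largest_eigenvalue (mat r r (\<lambda>(i, j). P i j * real (n j))) \<ge> 1 + \<epsilon>"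
    and i: "i < r"
  shows "gw_extinction_prob r n P (basis_pop i)
     \<le> 1 - min (1/2) (\<epsilon>/2) * ((\<epsilon> / (real A + 1)) / (1 + \<epsilon> / (real A + 1))) ^ (r - 1)"
proof -
  define c where "c = min (1/2) (\<epsilon>/2)"
  define a where "a = \<epsilon> / (real A + 1)"
  have c: "0 < c" "c \<le> 1/2" "2 * c \<le> \<epsilon>" using eps unfolding c_def by auto
  have a: "0 < a" using eps unfolding a_def by auto
  have Apos: "0 < A" using ratio npos r by (metis mult_eq_0_iff not_gr0 le_zero_eq)
  have nlow: "1 / \<epsilon> \<le> real (n j)" if j: "j < r" for j
  proof -
    have "(\<Sum>k<r. n k) \<le> (\<Sum>k<r. A * n j)" using ratio j by (intro sum_mono) auto
    also have "\<dots> = r * A * n j" by simp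
    finally have "r * A * nat \<lceil>1 / \<epsilon>\<rceil> \<le> r * A * n j" using big by linarith
    then have "nat \<lceil>1 / \<epsilon>\<rceil> \<le> n j" using r Apos by simp
    then have "real (nat \<lceil>1 / \<epsilon>\<rceil>) \<le> real (n j)" by linarith
    moreover have "1 / \<epsilon> \<le> real (nat \<lceil>1 / \<epsilon>\<rceil>)" by linarith
    ultimately show ?thesis by linarith
  qed
  have sq_pos: "0 < sqrt (real (n i * n j))" if "i < r" "j < r" for i j
    using npos that by simp
  have Prange: "P i j \<in> {0..1}" if ij: "i < r" "j < r" for i j
  proof -
    have "(1/\<epsilon>) * (1/\<epsilon>) \<le> real (n i) * real (n j)"
      using nlow[OF ij(1)] nlow[OF ij(2)] eps by (intro mult_mono) auto
    then have "sqrt ((1/\<epsilon>)\<^sup>2) \<le> sqrt (real (n i * n j))"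
      by (simp add: power2_eq_square)
    then have s1: "1/\<epsilon> \<le> sqrt (real (n i * n j))" using eps by simp
    have d: "L i j = 0 \<or> L i j \<le> 1/\<epsilon>" using sep ij unfolding eps_separated_def by auto
    have "0 < 1/\<epsilon>" using eps by simp
    then have L1: "L i j \<le> 1/\<epsilon>" "0 \<le> L i j" using d symL ij by auto
    show ?thesis unfolding Pdef using L1 s1 sq_pos[OF ij]
      by (auto simp: divide_le_eq_1)
  qed
  have edge: "a \<le> P i j * real (n j)" if ij: "i < r" "j < r" and Lp: "L i j > 0" for i j
  proof -
    have "L i j = 0 \<or> \<epsilon> \<le> L i j" using sep ij unfolding eps_separated_def by auto
    then have Le: "\<epsilon> \<le> L i j" using Lp by auto
    have nj: "0 < real (n j)" using npos ij by simp
    have "real (n i) \<le> (real A + 1) * real (n j)"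
    proof -
      have "real (n i) \<le> real A * real (n j)" using ratio ij by (metis of_nat_le_iff of_nat_mult)
      then show ?thesis using nj by (simp add: algebra_simps)
    qed
    moreover have "real (n j) \<le> (real A + 1) * real (n j)" using nj by (simp add: algebra_simps)
    ultimately have "real (n i) * real (n j) \<le> ((real A + 1) * real (n j)) * ((real A + 1) * real (n j))"
      by (intro mult_mono) auto
    then have "real (n i) * real (n j) \<le> ((real A + 1) * real (n j))\<^sup>2"
      by (simp add: power2_eq_square)
    then have sq: "sqrt (real (n i * n j)) \<le> (real A + 1) * real (n j)"
      using nj by (simp add: real_sqrt_le_iff real_le_lsqrt real_sqrt_le_mono)
    have "a = \<epsilon> * real (n j) / ((real A + 1) * real (n j))" unfolding a_def using nj by simp
    also have "\<dots> \<le> L i j * real (n j) / ((real A + 1) * real (n j))"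
      using Le nj by (intro divide_right_mono mult_right_mono) auto
    also have "\<dots> \<le> L i j * real (n j) / sqrt (real (n i * n j))"
      using sq sq_pos[OF ij] Le eps nj by (intro divide_left_mono) auto
    also have "\<dots> = P i j * real (n j)" unfolding Pdef by simp
    finally show ?thesis .
  qed
  define m where "m i j = P i j * real (n j)" for i j
  have m0: "0 \<le> m i j" if "i < r" "j < r" for i j using Prange[OF that] unfolding m_def by simp
  have msym: "real (n i) * m i j = real (n j) * m j i" if "i < r" "j < r" for i j
    unfolding m_def Pdef using symL that by (simp add: mult.commute mult.left_commute)
  define Mt where "Mt = mat r r (\<lambda>(i, j). m i j)"
  have Mt: "Mt \<in> carrier_mat r r" unfolding Mt_def by simp
  have ex: "\<exists>k. eigenvalue Mt k" unfolding Mt_def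
    by (rule real_eig_exists[OF r _ msym]) (use npos in auto)
  have fin: "finite {k. eigenvalue Mt k}"
    using card_finite_spectrum(1)[OF Mt] unfolding spectrum_def .
  define k where "k = largest_eigenvalue Mt"
  have kev: "eigenvalue Mt k" unfolding k_def largest_eigenvalue_def
    using Max_in[OF fin] ex by auto
  have kge: "1 + \<epsilon> \<le> k" using ev unfolding k_def Mt_def m_def by simp
  have k0: "0 \<le> k" using kge eps by simp
  obtain u where u0: "\<forall>j<r. 0 \<le> u j" and upos: "\<exists>j<r. u j > 0"
    and uk: "\<forall>i<r. k * u i \<le> (\<Sum>j<r. m i j * u j)"
    using abs_eigvec[OF kev[unfolded Mt_def] k0 m0] by blast
  define mx where "mx = Max (u ` {..<r})"
  have finu: "finite (u ` {..<r})" "u ` {..<r} \<noteq> {}" using r by auto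
  obtain i0 where i0: "i0 < r" "u i0 = mx" using Max_in[OF finu] unfolding mx_def by auto
  have umx: "u j \<le> mx" if "j < r" for j unfolding mx_def using finu that by auto
  have mxpos: "0 < mx" using upos umx by force
  define u' where "u' j = c * u j / mx" for j
  have u'r: "0 \<le> u' j \<and> u' j \<le> c" if "j < r" for j
  proof -
    have "u j / mx \<le> 1" using umx[OF that] mxpos by simp
    then have "c * (u j / mx) \<le> c * 1" using c by (intro mult_left_mono) auto
    then show ?thesis unfolding u'_def using u0 that c mxpos by auto
  qed
  have u'i0: "u' i0 = c" unfolding u'_def using i0 mxpos by simp
  have u'M: "(1 + \<epsilon>) * u' i \<le> (\<Sum>j<r. P i j * real (n j) * u' j)" if i: "i < r" for i
  proof -
    have "(1 + \<epsilon>) * u i \<le> k * u i" using kge u0 i by (intro mult_right_mono) auto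
    also have "\<dots> \<le> (\<Sum>j<r. m i j * u j)" using uk i by auto
    finally have "(c / mx) * ((1 + \<epsilon>) * u i) \<le> (c / mx) * (\<Sum>j<r. m i j * u j)"
      using c mxpos by (intro mult_left_mono) auto
    then show ?thesis unfolding u'_def m_def
      by (simp add: sum_distrib_left mult_ac)
  qed
  define s0 where "s0 j = 1 - u' j" for j
  have s0r: "0 \<le> s0 j \<and> s0 j \<le> 1" if "j < r" for j
    using u'r[OF that] c unfolding s0_def by auto
  have s0sup: "gwf r n P s0 i \<le> s0 i" if "i < r" for i
    unfolding s0_def by (rule gwf_super[where u=u' and c=c and e=\<epsilon> and r=r and n=n and P=P, OF Prange u'r c(2) c(3) u'M[OF that] that])
  have ci0: "c \<le> 1 - s0 i0" using u'i0 unfolding s0_def by simp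
  have c0: "0 \<le> c" using c by simp
  have symm: "L i j = L j i" if "i < r" "j < r" for i j using symL that by simp
  obtain s where sr: "\<forall>j<r. 0 \<le> s j \<and> s j \<le> 1" and ssup: "\<forall>i<r. gwf r n P s i \<le> s i"
    and sb: "\<forall>i<r. c * (a / (1 + a)) ^ (r - 1) \<le> 1 - s i"
    using iterate_bound[OF Prange s0r s0sup i0(1) ci0 c0 a edge conn symm] by blast
  have "gw_extinction_prob r n P (basis_pop i) \<le> s i"
    by (rule extinction_bound[where r=r and n=n and P=P and s=s, OF Prange _ _ i]) (use sr ssup in auto)
  also have "\<dots> \<le> 1 - c * (a / (1 + a)) ^ (r - 1)" using sb i by auto
  finally show ?thesis unfolding c_def a_def .
qed


theorem lemma3p1:
  fixes \<epsilon> :: real and A r :: nat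
  assumes "\<epsilon> > 0"
  shows "\<exists>\<delta>::real. \<delta> > 0 \<and> (\<exists>N::nat. \<forall>(n::nat \<Rightarrow> nat) (L::nat \<Rightarrow> nat \<Rightarrow> real).
     (\<forall>i<r. n i > 0) \<longrightarrow>
     (\<forall>i<r. \<forall>j<r. n i \<le> A * n j) \<longrightarrow>
     (\<Sum>i<r. n i) \<ge> N \<longrightarrow>
     (\<forall>i<r. \<forall>j<r. L i j = L j i \<and> L i j \<ge> 0) \<longrightarrow>
     connected_mat r L \<longrightarrow>
     eps_separated \<epsilon> r L \<longrightarrow>
     (let P = (\<lambda>i j. L i j / sqrt (real (n i * n j)));
          M = mat r r (\<lambda>(i, j). P i j * real (n j))
      in largest_eigenvalue M \<ge> 1 + \<epsilon> \<longrightarrow>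
         (\<forall>i<r. gw_extinction_prob r n P (basis_pop i) \<le> 1 - \<delta>)))"
proof -
  define \<delta> where "\<delta> = min (1/2) (\<epsilon>/2) * ((\<epsilon> / (real A + 1)) / (1 + \<epsilon> / (real A + 1))) ^ (r - 1)"
  define N where "N = r * A * nat \<lceil>1 / \<epsilon>\<rceil>"
  have dpos: "\<delta> > 0" unfolding \<delta>_def using assms
    by (intro mult_pos_pos zero_less_power divide_pos_pos) (auto simp: add_pos_pos)
  have main: "\<forall>(n::nat \<Rightarrow> nat) (L::nat \<Rightarrow> nat \<Rightarrow> real).
     (\<forall>i<r. n i > 0) \<longrightarrow>
     (\<forall>i<r. \<forall>j<r. n i \<le> A * n j) \<longrightarrow>
     (\<Sum>i<r. n i) \<ge> N \<longrightarrow>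
     (\<forall>i<r. \<forall>j<r. L i j = L j i \<and> L i j \<ge> 0) \<longrightarrow>
     connected_mat r L \<longrightarrow>
     eps_separated \<epsilon> r L \<longrightarrow>
     (let P = (\<lambda>i j. L i j / sqrt (real (n i * n j)));
          M = mat r r (\<lambda>(i, j). P i j * real (n j))
      in largest_eigenvalue M \<ge> 1 + \<epsilon> \<longrightarrow>
         (\<forall>i<r. gw_extinction_prob r n P (basis_pop i) \<le> 1 - \<delta>))"
  proof (intro allI impI)
    fix n :: "nat \<Rightarrow> nat" and L :: "nat \<Rightarrow> nat \<Rightarrow> real"
    assume h1: "\<forall>i<r. n i > 0" and h2: "\<forall>i<r. \<forall>j<r. n i \<le> A * n j"
      and h3: "(\<Sum>i<r. n i) \<ge> N" and h4: "\<forall>i<r. \<forall>j<r. L i j = L j i \<and> L i j \<ge> 0"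
      and h5: "connected_mat r L" and h6: "eps_separated \<epsilon> r L"
    show "let P = (\<lambda>i j. L i j / sqrt (real (n i * n j)));
          M = mat r r (\<lambda>(i, j). P i j * real (n j))
      in largest_eigenvalue M \<ge> 1 + \<epsilon> \<longrightarrow>
         (\<forall>i<r. gw_extinction_prob r n P (basis_pop i) \<le> 1 - \<delta>)"
      unfolding Let_def
    proof (intro impI allI)
      fix i
      assume ev: "1 + \<epsilon> \<le> largest_eigenvalue (mat r r (\<lambda>(i, j). L i j / sqrt (real (n i * n j)) * real (n j)))"
        and i: "i < r"
      have r: "0 < r" using i by simp
      have big: "r * A * nat \<lceil>1 / \<epsilon>\<rceil> \<le> (\<Sum>i<r. n i)" using h3 unfolding N_def .
      show "gw_extinction_prob r n (\<lambda>i j. L i j / sqrt (real (n i * n j))) (basis_pop i) \<le> 1 - \<delta>"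
        unfolding \<delta>_def
        by (rule main_core[OF assms r h1 h2 big h4 h5 h6 refl _ i]) (use ev in simp)
    qed
  qed
  show ?thesis using dpos main by blast
qed

end
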